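(* Let $f,g$ be functions on $\mathbb{T}$, $k'\ge0$ and $m\in\mathbb{N}^*=\{1,2,\dots\}$. Then $$\Big\|D^{k'}(f\,\partial_x^mg)-\sum_{l=0}^{m-1}\binom{k'}{l}D^lf\,D^{k'-l}\partial_x^mg\Big\|_{L^2}\lesssim\|f\|_{H^{k'+m}}\|g\|_{H^{\frac12+}}+\|f\|_{H^{(m+\frac12)+}}\|g\|_{H^{k'}}.$$
   Context: $\mathbb{T}=\mathbb{R}/2\pi\mathbb{Z}$; $\|f\|_{H^s}=\|\{(1+n^2)^{s/2}\hat f(n)\}_{n\in\mathbb{Z}}\|_{\ell^2}$. For $r\in\mathbb{R}$, $D^r$ is the Fourier multiplier $\widehat{D^rf}(n)=(in)^r\hat f(n)$. For $q\in\mathbb{R}$, $p\in\mathbb{N}$: $\binom{q}{p}=\frac{q(q-1)\cdots(q-p+1)}{p!}$ for $p\ne0$, $\binom{q}{0}=1$. $s+$ denotes $s+\eta$ for a fixed arbitrarily small $\eta>0$, and $a\lesssim b$ means $a\le Cb$ with $C$ independent of $f,g$. *)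

theory Defs
  imports "HOL-Analysis.Analysis"
begin

text \<open>A (generalized) function on the torus T = R/2piZ is represented by its
Fourier coefficient sequence \<open>a :: int \<Rightarrow> complex\<close>, a n = hat f (n).\<close>

text \<open>Fourier multiplier symbol (i n)^r of D^r, principal branch;
convention (i 0)^0 = 1 (D^0 = id) and (i 0)^r = 0 for r \<noteq> 0.\<close>
definition Dsym :: "real \<Rightarrow> int \<Rightarrow> complex" where
  "Dsym r n = (if r = 0 then 1 else if n = 0 then 0
               else (\<i> * of_int n) powr (complex_of_real r))"

definition Dop :: "real \<Rightarrow> (int \<Rightarrow> complex) \<Rightarrow> (int \<Rightarrow> complex)" where
  "Dop r a = (\<lambda>n. Dsym r n * a n)"

definition dx :: "nat \<Rightarrow> (int \<Rightarrow> complex) \<Rightarrow> (int \<Rightarrow> complex)" where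
  "dx m a = (\<lambda>n. (\<i> * of_int n) ^ m * a n)"

text \<open>Pointwise product of functions = convolution of Fourier coefficients.\<close>
definition fprod :: "(int \<Rightarrow> complex) \<Rightarrow> (int \<Rightarrow> complex) \<Rightarrow> (int \<Rightarrow> complex)" where
  "fprod a b = (\<lambda>n. \<Sum>\<^sub>\<infinity>j. a j * b (n - j))"

definition in_H :: "real \<Rightarrow> (int \<Rightarrow> complex) \<Rightarrow> bool" where
  "in_H s a \<longleftrightarrow> (\<lambda>n. (1 + (real_of_int n)\<^sup>2) powr s * (cmod (a n))\<^sup>2) summable_on UNIV"

definition H_norm :: "real \<Rightarrow> (int \<Rightarrow> complex) \<Rightarrow> real" where
  "H_norm s a = sqrt (\<Sum>\<^sub>\<infinity>n. (1 + (real_of_int n)\<^sup>2) powr s * (cmod (a n))\<^sup>2)"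

end

theory Submission
  imports Defs
begin

lemma taylor_rem:
  fixes k :: real and m :: nat
  shows "\<exists>CR\<ge>0. \<forall>t::real. \<bar>t\<bar> \<le> 1/2 \<longrightarrow>
     \<bar>(1+t) powr k - (\<Sum>l<m. (k gchoose l) * t^l)\<bar> \<le> CR * \<bar>t\<bar>^m"
proof -
  have s34: "summable (\<lambda>n. (k gchoose n) * (3/4::real)^n)"
    using gen_binomial_real[of "3/4" k] by (auto simp: sums_iff)
  have sabs: "summable (\<lambda>n. norm (k gchoose n) * (1/2::real)^n)"
    using powser_insidea[OF s34, of "1/2"] by (simp add: abs_mult)
  hence sabs': "summable (\<lambda>n. \<bar>k gchoose (n+m)\<bar> * (1/2::real)^n)"
  proof -
    have "summable (\<lambda>n. \<bar>k gchoose (n+m)\<bar> * (1/2::real)^(n+m))"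
      using sabs summable_iff_shift[of "\<lambda>n. \<bar>k gchoose n\<bar> * (1/2::real)^n" m] by simp
    hence "summable (\<lambda>n. (2^m) * (\<bar>k gchoose (n+m)\<bar> * (1/2::real)^(n+m)))"
      by (rule summable_mult)
    moreover have "(\<lambda>n. (2^m) * (\<bar>k gchoose (n+m)\<bar> * (1/2::real)^(n+m))) = (\<lambda>n. \<bar>k gchoose (n+m)\<bar> * (1/2::real)^n)"
      by (auto simp: power_add field_simps)
    ultimately show ?thesis by simp
  qed
  define CR where "CR = (\<Sum>n. \<bar>k gchoose (n+m)\<bar> * (1/2::real)^n)"
  have CR0: "CR \<ge> 0" unfolding CR_def using sabs' by (intro suminf_nonneg) auto
  show ?thesis
  proof (intro exI[of _ CR] conjI allI impI CR0)
    fix t :: real assume t: "\<bar>t\<bar> \<le> 1/2"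
    have sm: "(\<lambda>n. (k gchoose n) * t^n) sums (1+t) powr k"
      using gen_binomial_real[of t k] t by simp
    hence sm2: "(\<lambda>n. (k gchoose (n+m)) * t^(n+m)) sums ((1+t) powr k - (\<Sum>l<m. (k gchoose l) * t^l))"
      using sums_split_initial_segment[OF sm, of m] by simp
    have eq: "(\<lambda>n. (k gchoose (n+m)) * t^(n+m)) = (\<lambda>n. t^m * ((k gchoose (n+m)) * t^n))"
      by (auto simp: power_add field_simps)
    have b1: "\<And>n. norm ((k gchoose (n+m)) * t^n) \<le> \<bar>k gchoose (n+m)\<bar> * (1/2::real)^n"
      using t by (auto simp: abs_mult power_abs intro!: mult_left_mono power_mono)
    have sm3: "summable (\<lambda>n. (k gchoose (n+m)) * t^n)"
      by (rule summable_comparison_test[OF _ sabs']) (use b1 in auto)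
    have "(\<lambda>n. t^m * ((k gchoose (n+m)) * t^n)) sums (t^m * (\<Sum>n. (k gchoose (n+m)) * t^n))"
      using sm3 by (intro sums_mult summable_sums)
    hence val: "(1+t) powr k - (\<Sum>l<m. (k gchoose l) * t^l) = t^m * (\<Sum>n. (k gchoose (n+m)) * t^n)"
      using sm2 eq sums_unique2 by metis
    have "\<bar>\<Sum>n. (k gchoose (n+m)) * t^n\<bar> \<le> CR"
    proof -
      have sa: "summable (\<lambda>n. norm ((k gchoose (n+m)) * t^n))"
        by (rule summable_comparison_test[OF _ sabs']) (use b1 in auto)
      have "\<bar>\<Sum>n. (k gchoose (n+m)) * t^n\<bar> \<le> (\<Sum>n. norm ((k gchoose (n+m)) * t^n))"
        using summable_norm[OF sa] by simp
      also have "\<dots> \<le> (\<Sum>n. \<bar>k gchoose (n+m)\<bar> * (1/2::real)^n)"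
        by (rule suminf_le[OF b1 sa sabs'])
      finally show ?thesis unfolding CR_def .
    qed
    thus "\<bar>(1+t) powr k - (\<Sum>l<m. (k gchoose l) * t^l)\<bar> \<le> CR * \<bar>t\<bar>^m"
      unfolding val by (simp add: abs_mult power_abs mult.commute[of _ "\<bar>t\<bar>^m"] mult_left_mono)
  qed
qed

definition wt :: "real \<Rightarrow> real \<Rightarrow> real" where
  "wt s x = (1 + x\<^sup>2) powr (s/2)"

lemma onepx2: "0 < 1 + (x::real)\<^sup>2"
  by (simp add: add_pos_nonneg)

lemma onepx1: "1 + (x::real)\<^sup>2 \<noteq> 0"
  using onepx2[of x] by linarith

lemmas onepx = onepx1 onepx2

lemma wt_pos: "wt s x > 0"
  unfolding wt_def using onepx[of x] by simp

lemma wt_ge1: "s \<ge> 0 \<Longrightarrow> wt s x \<ge> 1"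
  unfolding wt_def by (simp add: ge_one_powr_ge_zero)

lemma wt_mult: "wt a x * wt b x = wt (a+b) x"
  unfolding wt_def by (simp add: powr_add[symmetric] add_divide_distrib)

lemma wt_sq: "(wt s x)\<^sup>2 = (1 + x\<^sup>2) powr s"
proof -
  have "(wt s x)\<^sup>2 = wt s x * wt s x" by (simp add: power2_eq_square)
  also have "\<dots> = wt (s+s) x" by (rule wt_mult)
  finally show ?thesis unfolding wt_def by simp
qed

lemma wt_0 [simp]: "wt 0 x = 1"
  unfolding wt_def using onepx[of x] by simp

lemma wt_abs_le: assumes "s \<ge> 0" shows "\<bar>x\<bar> powr s \<le> wt s x"
proof -
  have "\<bar>x\<bar> \<le> (1 + x\<^sup>2) powr (1/2)"
    by (simp add: powr_half_sqrt add_pos_nonneg real_le_rsqrt)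
  hence "\<bar>x\<bar> powr s \<le> ((1 + x\<^sup>2) powr (1/2)) powr s"
    using assms by (intro powr_mono2) auto
  also have "\<dots> = wt s x" unfolding wt_def powr_powr by simp
  finally show ?thesis .
qed

lemma wt_pow: "\<bar>x\<bar>^n \<le> wt (real n) x"
proof (cases "n = 0")
  case True thus ?thesis by simp
next
  case False
  hence "\<bar>x\<bar>^n = \<bar>x\<bar> powr (real n)" by (simp add: powr_realpow')
  thus ?thesis using wt_abs_le[of "real n" x] by simp
qed

lemma wt_scale:
  assumes "s \<ge> 0" "c \<ge> 1" "\<bar>x\<bar> \<le> c * \<bar>y\<bar>"
  shows "wt s x \<le> c powr s * wt s y"
proof -
  have "x\<^sup>2 \<le> (c * \<bar>y\<bar>)\<^sup>2" using assms by (metis abs_ge_zero power2_abs power_mono)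
  moreover have "1 \<le> c\<^sup>2" using assms by (simp add: one_le_power)
  ultimately have "1 + x\<^sup>2 \<le> c\<^sup>2 * (1 + y\<^sup>2)"
    by (simp add: power_mult_distrib algebra_simps)
  hence "(1 + x\<^sup>2) powr (s/2) \<le> (c\<^sup>2 * (1 + y\<^sup>2)) powr (s/2)"
    using assms by (intro powr_mono2) (auto simp: add_nonneg_nonneg)
  also have "\<dots> = (c\<^sup>2) powr (s/2) * (1 + y\<^sup>2) powr (s/2)"
    by (rule powr_mult)
  also have "(c\<^sup>2) powr (s/2) = c powr s"
  proof -
    have "c\<^sup>2 = c powr 2" using assms by (simp add: powr_numeral)
    hence "(c\<^sup>2) powr (s/2) = c powr (2 * (s/2))" by (simp add: powr_powr)
    thus ?thesis by simp
  qed
  finally show ?thesis unfolding wt_def .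
qed

lemma wt_mono: "s \<ge> 0 \<Longrightarrow> \<bar>x\<bar> \<le> \<bar>y\<bar> \<Longrightarrow> wt s x \<le> wt s y"
  using wt_scale[of s 1 x y] by simp

lemma wt_exp_mono: "s \<le> t \<Longrightarrow> wt s x \<le> wt t x"
  unfolding wt_def by (intro powr_mono) auto

lemma wt_peetre:
  assumes "s \<ge> 0"
  shows "wt s (x + y) \<le> 2 powr (s/2) * (wt s x * wt s y)"
proof -
  have e1: "2*x\<^sup>2 + 2*y\<^sup>2 - (x+y)\<^sup>2 = (x-y)\<^sup>2" by (simp add: power2_eq_square algebra_simps)
  have e2: "2 * ((1 + x\<^sup>2) * (1 + y\<^sup>2)) = 2 + 2*x\<^sup>2 + 2*y\<^sup>2 + 2*(x\<^sup>2*y\<^sup>2)" by (simp add: algebra_simps)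
  have "0 \<le> (x-y)\<^sup>2" "0 \<le> x\<^sup>2*y\<^sup>2" by simp_all
  hence "1 + (x+y)\<^sup>2 \<le> 2 * ((1 + x\<^sup>2) * (1 + y\<^sup>2))" using e1 e2 by linarith
  hence "(1 + (x+y)\<^sup>2) powr (s/2) \<le> (2 * ((1 + x\<^sup>2) * (1 + y\<^sup>2))) powr (s/2)"
    using assms by (intro powr_mono2) (auto simp: add_nonneg_nonneg)
  also have "\<dots> = 2 powr (s/2) * ((1 + x\<^sup>2) powr (s/2) * (1 + y\<^sup>2) powr (s/2))"
    by (simp add: powr_mult add_nonneg_nonneg)
  finally show ?thesis unfolding wt_def .
qed

lemma wt_uminus [simp]: "wt s (-x) = wt s x"
  unfolding wt_def by simp

lemma Dsym_nz: "n \<noteq> 0 \<Longrightarrow> Dsym r n = (\<i> * of_int n) powr (complex_of_real r)"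
  unfolding Dsym_def by simp

lemma norm_Dsym_nz: "n \<noteq> 0 \<Longrightarrow> norm (Dsym r n) = \<bar>real_of_int n\<bar> powr r"
  by (simp add: Dsym_nz norm_powr_real_powr' norm_mult)

lemma norm_Dsym_le: "r \<ge> 0 \<Longrightarrow> norm (Dsym r n) \<le> wt r (real_of_int n)"
proof (cases "n = 0")
  case True thus ?thesis using wt_ge1[of r] wt_pos[of r] by (auto simp: Dsym_def less_imp_le)
next
  case False thus "r \<ge> 0 \<Longrightarrow> ?thesis" using wt_abs_le[of r "real_of_int n"] by (simp add: norm_Dsym_nz)
qed

lemma Dsym_nat: "Dsym (real l) n = (\<i> * of_int n) ^ l"
  unfolding Dsym_def by (auto simp: powr_nat')

lemma norm_Dsym_dx:
  assumes "m \<ge> 1" "r + real m \<ge> 0"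
  shows "norm (Dsym r b * (\<i> * of_int b)^m) \<le> wt (r + real m) (real_of_int b)"
proof (cases "b = 0")
  case True
  have "(\<i> * of_int b)^m = (0::complex)" using True assms by (simp add: power_0_left)
  thus ?thesis using wt_pos[of "r + real m" 0] True assms by (simp add: less_imp_le power_0_left)
next
  case False
  have "norm (Dsym r b * (\<i> * of_int b)^m) = \<bar>real_of_int b\<bar> powr r * \<bar>real_of_int b\<bar> powr (real m)"
    using False by (simp add: norm_Dsym_nz norm_mult norm_power powr_realpow)
  also have "\<dots> = \<bar>real_of_int b\<bar> powr (r + real m)" by (simp add: powr_add)
  also have "\<dots> \<le> wt (r + real m) (real_of_int b)" using assms by (intro wt_abs_le)
  finally show ?thesis .
qed

definition Kf :: "real \<Rightarrow> nat \<Rightarrow> int \<Rightarrow> int \<Rightarrow> complex" where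
 "Kf k m a b = Dsym k (a+b) * (\<i> * of_int b)^m
    - (\<Sum>l<m. complex_of_real (k gchoose l) * (Dsym (real l) a * (Dsym (k - real l) b * (\<i> * of_int b)^m)))"

lemma kernel_caseA:
  assumes k: "k \<ge> 0" and m: "m \<ge> 1" and CR: "\<forall>t::real. \<bar>t\<bar> \<le> 1/2 \<longrightarrow>
     \<bar>(1+t) powr k - (\<Sum>l<m. (k gchoose l) * t^l)\<bar> \<le> CR * \<bar>t\<bar>^m"
    and CR0: "CR \<ge> 0" and b: "b \<noteq> 0" and ab: "2 * \<bar>real_of_int a\<bar> \<le> \<bar>real_of_int b\<bar>"
  shows "norm (Kf k m a b) \<le> CR * (wt (real m) (real_of_int a) * wt k (real_of_int b))"
proof -
  define x where "x = real_of_int a"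
  define y where "y = real_of_int b"
  define t where "t = x / y"
  define z where "z = \<i> * complex_of_int b"
  have y0: "y \<noteq> 0" using b by (simp add: y_def)
  have z0: "z \<noteq> 0" using b by (simp add: z_def)
  have tb: "\<bar>t\<bar> \<le> 1/2" using ab y0 by (simp add: t_def x_def[symmetric] y_def[symmetric] abs_divide field_simps)
  have t1: "1 + t > 0" using tb by linarith
  have ab0: "a + b \<noteq> 0"
  proof
    assume "a + b = 0" hence "x = - y" by (simp add: x_def y_def)
    thus False using ab y0 by (simp add: x_def[symmetric] y_def[symmetric])
  qed
  have ea: "\<i> * complex_of_int a = complex_of_real t * z"
    using y0 by (simp add: z_def t_def x_def y_def)
  have eab: "\<i> * complex_of_int (a+b) = complex_of_real (1+t) * z"
    using y0 by (simp add: z_def t_def x_def y_def field_simps)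
  have D1: "Dsym k (a+b) = complex_of_real ((1+t) powr k) * z powr complex_of_real k"
  proof -
    have "Dsym k (a+b) = (\<i> * complex_of_int (a+b)) powr complex_of_real k" using ab0 by (rule Dsym_nz)
    also have "\<dots> = (complex_of_real (1+t) * z) powr complex_of_real k" by (simp only: eab)
    also have "\<dots> = complex_of_real (1+t) powr complex_of_real k * z powr complex_of_real k"
      by (rule powr_times_real_left) (use t1 in auto)
    also have "complex_of_real (1+t) powr complex_of_real k = complex_of_real ((1+t) powr k)"
      by (rule powr_of_real) (use t1 in auto)
    finally show ?thesis .
  qed
  have D2: "Dsym (real l) a = complex_of_real t ^ l * z ^ l" for l
    by (simp add: Dsym_nat ea power_mult_distrib)
  have D3: "Dsym (k - real l) b = z powr complex_of_real k / z ^ l" for l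
    using b z0 by (simp add: Dsym_nz z_def[symmetric] powr_diff powr_nat')
  have "Kf k m a b = (z powr complex_of_real k * z^m) *
      complex_of_real ((1+t) powr k - (\<Sum>l<m. (k gchoose l) * t^l))"
    unfolding Kf_def D1 D2 D3 z_def[symmetric] using z0
    by (simp add: sum_distrib_left algebra_simps power_mult_distrib)
  hence "norm (Kf k m a b) = norm (z powr complex_of_real k) * norm (z^m) *
      norm (complex_of_real ((1+t) powr k - (\<Sum>l<m. (k gchoose l) * t^l)))"
    by (simp only: norm_mult)
  moreover have "norm (z powr complex_of_real k) = \<bar>y\<bar> powr k"
    by (simp add: norm_powr_real_powr' z_def y_def norm_mult)
  moreover have "norm (z^m) = \<bar>y\<bar>^m" by (simp add: norm_power z_def y_def norm_mult)
  moreover have "norm (complex_of_real ((1+t) powr k - (\<Sum>l<m. (k gchoose l) * t^l))) =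
     \<bar>(1+t) powr k - (\<Sum>l<m. (k gchoose l) * t^l)\<bar>" by (rule norm_of_real)
  ultimately have "norm (Kf k m a b) = \<bar>y\<bar> powr k * \<bar>y\<bar>^m * \<bar>(1+t) powr k - (\<Sum>l<m. (k gchoose l) * t^l)\<bar>"
    by simp
  also have "\<dots> \<le> \<bar>y\<bar> powr k * \<bar>y\<bar>^m * (CR * \<bar>t\<bar>^m)"
    using CR tb by (intro mult_left_mono) auto
  also have "\<dots> = CR * (\<bar>x\<bar>^m * \<bar>y\<bar> powr k)"
    using y0 by (simp add: t_def abs_divide power_divide field_simps)
  also have "\<dots> \<le> CR * (wt (real m) x * wt k y)"
  proof -
    have "CR \<ge> 0" by (rule CR0)
    moreover have "\<bar>x\<bar>^m * \<bar>y\<bar> powr k \<le> wt (real m) x * wt k y"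
      by (intro mult_mono wt_pow wt_abs_le k) (auto simp: wt_pos less_imp_le)
    ultimately show ?thesis by (rule mult_left_mono[rotated])
  qed
  finally show ?thesis by (simp add: x_def y_def)
qed

lemma kernel_caseB:
  assumes k: "k \<ge> 0" and m: "m \<ge> 1"
    and b: "b \<noteq> 0" and ab: "\<bar>real_of_int b\<bar> < 2 * \<bar>real_of_int a\<bar>"
  shows "norm (Kf k m a b) \<le> (3 powr k * 2 powr real m + (\<Sum>l<m. \<bar>k gchoose l\<bar>) * 2 powr (k + real m))
           * wt (k + real m) (real_of_int a)"
proof -
  define x where "x = real_of_int a"
  define y where "y = real_of_int b"
  define z where "z = \<i> * complex_of_int b"
  have yx: "\<bar>y\<bar> \<le> 2 * \<bar>x\<bar>" using ab by (simp add: x_def y_def)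
  have xy3: "\<bar>x + y\<bar> \<le> 3 * \<bar>x\<bar>" using yx by linarith
  have first: "norm (Dsym k (a+b) * z^m) \<le> 3 powr k * 2 powr real m * wt (k + real m) x"
  proof -
    have "norm (Dsym k (a+b) * z^m) = norm (Dsym k (a+b)) * \<bar>y\<bar>^m"
      by (simp add: norm_mult norm_power z_def y_def)
    also have "\<dots> \<le> (3 powr k * wt k x) * (2 powr real m * wt (real m) x)"
    proof (rule mult_mono)
      have "norm (Dsym k (a+b)) \<le> wt k (x+y)"
        using norm_Dsym_le[OF k, of "a+b"] by (simp add: x_def y_def)
      also have "\<dots> \<le> 3 powr k * wt k x" using k xy3 by (intro wt_scale) auto
      finally show "norm (Dsym k (a+b)) \<le> 3 powr k * wt k x" .
      have "\<bar>y\<bar>^m \<le> wt (real m) y" by (rule wt_pow)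
      also have "\<dots> \<le> 2 powr real m * wt (real m) x" using yx by (intro wt_scale) auto
      finally show "\<bar>y\<bar>^m \<le> 2 powr real m * wt (real m) x" .
    qed (auto simp: wt_pos less_imp_le)
    also have "\<dots> = 3 powr k * 2 powr real m * wt (k + real m) x"
      by (simp add: wt_mult[symmetric] algebra_simps)
    finally show ?thesis .
  qed
  have termb: "norm (complex_of_real (k gchoose l) * (Dsym (real l) a * (Dsym (k - real l) b * z^m)))
       \<le> \<bar>k gchoose l\<bar> * 2 powr (k + real m) * wt (k + real m) x" if l: "l < m" for l
  proof -
    have "norm (complex_of_real (k gchoose l) * (Dsym (real l) a * (Dsym (k - real l) b * z^m)))
       = \<bar>k gchoose l\<bar> * (norm (Dsym (real l) a) * norm (Dsym (k - real l) b * z^m))"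
      by (simp add: norm_mult)
    also have "\<dots> \<le> \<bar>k gchoose l\<bar> * (wt (real l) x * (2 powr (k + real m) * wt (k - real l + real m) x))"
    proof (intro mult_left_mono mult_mono)
      show "norm (Dsym (real l) a) \<le> wt (real l) x" using norm_Dsym_le[of "real l" a] by (simp add: x_def)
      have "norm (Dsym (k - real l) b * z^m) \<le> wt (k - real l + real m) y"
        unfolding z_def y_def using m l k by (intro norm_Dsym_dx) auto
      also have "\<dots> \<le> 2 powr (k - real l + real m) * wt (k - real l + real m) x"
        using yx l k by (intro wt_scale) auto
      also have "\<dots> \<le> 2 powr (k + real m) * wt (k - real l + real m) x"
        by (intro mult_right_mono powr_mono) (auto simp: wt_pos less_imp_le)
      finally show "norm (Dsym (k - real l) b * z^m) \<le> 2 powr (k + real m) * wt (k - real l + real m) x" .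
    qed (auto simp: wt_pos less_imp_le)
    also have "\<dots> = \<bar>k gchoose l\<bar> * 2 powr (k + real m) * (wt (real l) x * wt (k - real l + real m) x)"
      by (simp add: algebra_simps)
    also have "wt (real l) x * wt (k - real l + real m) x = wt (k + real m) x"
      by (simp add: wt_mult)
    finally show ?thesis .
  qed
  have "norm (Kf k m a b) \<le> norm (Dsym k (a+b) * z^m) +
      norm (\<Sum>l<m. complex_of_real (k gchoose l) * (Dsym (real l) a * (Dsym (k - real l) b * z^m)))"
    unfolding Kf_def z_def by (rule norm_triangle_ineq4)
  also have "\<dots> \<le> 3 powr k * 2 powr real m * wt (k + real m) x +
      (\<Sum>l<m. \<bar>k gchoose l\<bar> * 2 powr (k + real m) * wt (k + real m) x)"
    by (intro add_mono first order.trans[OF norm_sum] sum_mono termb) auto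
  also have "\<dots> = (3 powr k * 2 powr real m + (\<Sum>l<m. \<bar>k gchoose l\<bar>) * 2 powr (k + real m)) * wt (k + real m) x"
    by (simp add: sum_distrib_right[symmetric] distrib_right mult.assoc)
  finally show ?thesis by (simp add: x_def)
qed

lemma kernel_bound:
  assumes k: "k \<ge> 0" and m: "m \<ge> 1"
  shows "\<exists>CK\<ge>0. \<forall>a b. norm (Kf k m a b) \<le>
     CK * (wt (k + real m) (real_of_int a) + wt (real m) (real_of_int a) * wt k (real_of_int b))"
proof -
  obtain CR where CR0: "CR \<ge> 0" and CR: "\<forall>t::real. \<bar>t\<bar> \<le> 1/2 \<longrightarrow>
     \<bar>(1+t) powr k - (\<Sum>l<m. (k gchoose l) * t^l)\<bar> \<le> CR * \<bar>t\<bar>^m"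
    using taylor_rem[of k m] by blast
  define C2 where "C2 = 3 powr k * 2 powr real m + (\<Sum>l<m. \<bar>k gchoose l\<bar>) * 2 powr (k + real m)"
  have C20: "C2 \<ge> 0" unfolding C2_def by (intro add_nonneg_nonneg mult_nonneg_nonneg sum_nonneg) auto
  show ?thesis
  proof (intro exI[of _ "CR + C2"] conjI allI)
    show "CR + C2 \<ge> 0" using CR0 C20 by simp
    fix a b
    define A where "A = wt (k + real m) (real_of_int a)"
    define B where "B = wt (real m) (real_of_int a) * wt k (real_of_int b)"
    have A0: "A \<ge> 0" and B0: "B \<ge> 0" unfolding A_def B_def by (auto simp: wt_pos less_imp_le)
    have "norm (Kf k m a b) \<le> C2 * A + CR * B"
    proof (cases "b = 0")
      case True
      have "Kf k m a b = 0" using True m by (simp add: Kf_def power_0_left)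
      thus ?thesis using A0 B0 C20 CR0 by simp
    next
      case b: False
      show ?thesis
      proof (cases "2 * \<bar>real_of_int a\<bar> \<le> \<bar>real_of_int b\<bar>")
        case True
        have "norm (Kf k m a b) \<le> CR * B" unfolding B_def by (rule kernel_caseA[OF k m CR CR0 b True])
        thus ?thesis using A0 C20 by (smt (verit) mult_nonneg_nonneg)
      next
        case False
        have "norm (Kf k m a b) \<le> C2 * A" unfolding A_def C2_def
          by (rule kernel_caseB[OF k m b]) (use False in linarith)
        thus ?thesis using B0 CR0 by (smt (verit) mult_nonneg_nonneg)
      qed
    qed
    also have "\<dots> \<le> (CR + C2) * (A + B)" using A0 B0 CR0 C20 by (simp add: algebra_simps)
    finally show "norm (Kf k m a b) \<le> (CR + C2) * (A + B)" .
  qed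
qed

lemma has_sum_finsum:
  fixes f :: "'i \<Rightarrow> 'a \<Rightarrow> 'b::topological_comm_monoid_add"
  assumes "finite I" "\<And>i. i \<in> I \<Longrightarrow> (f i has_sum s i) A"
  shows "((\<lambda>x. \<Sum>i\<in>I. f i x) has_sum (\<Sum>i\<in>I. s i)) A"
  using assms
proof (induction I rule: finite_induct)
  case empty thus ?case by (simp add: has_sum_0)
next
  case (insert i I)
  thus ?case by (simp add: has_sum_add)
qed

lemma cs_infsum:
  fixes a b :: "'a \<Rightarrow> real"
  assumes a0: "\<And>i. a i \<ge> 0" and b0: "\<And>i. b i \<ge> 0"
    and as: "(\<lambda>i. (a i)\<^sup>2) summable_on UNIV" and bs: "(\<lambda>i. (b i)\<^sup>2) summable_on UNIV"
  shows "(\<lambda>i. a i * b i) summable_on UNIV"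
    and "(\<Sum>\<^sub>\<infinity>i. a i * b i) \<le> sqrt (\<Sum>\<^sub>\<infinity>i. (a i)\<^sup>2) * sqrt (\<Sum>\<^sub>\<infinity>i. (b i)\<^sup>2)"
proof -
  have amgm: "a i * b i \<le> (1/2) * ((a i)\<^sup>2 + (b i)\<^sup>2)" for i
    using sum_squares_bound[of "a i" "b i"] by (simp add: power2_eq_square)
  have sab: "(\<lambda>i. (1/2) * ((a i)\<^sup>2 + (b i)\<^sup>2)) summable_on UNIV"
    using summable_on_add[OF as bs] by (rule summable_on_cmult_right)
  show ab: "(\<lambda>i. a i * b i) summable_on UNIV"
    by (rule summable_on_comparison_test[OF sab]) (use amgm a0 b0 in auto)
  define SA where "SA = (\<Sum>\<^sub>\<infinity>i. (a i)\<^sup>2)"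
  define SB where "SB = (\<Sum>\<^sub>\<infinity>i. (b i)\<^sup>2)"
  have SA0: "SA \<ge> 0" unfolding SA_def by (rule infsum_nonneg) simp
  have SB0: "SB \<ge> 0" unfolding SB_def by (rule infsum_nonneg) simp
  have ab0: "(\<Sum>\<^sub>\<infinity>i. a i * b i) \<ge> 0" by (rule infsum_nonneg) (use a0 b0 in auto)
  have main: "(\<Sum>\<^sub>\<infinity>i. a i * b i) \<le> sqrt SA * sqrt SB"
  proof (cases "SA = 0 \<or> SB = 0")
    case True
    have "\<forall>i. a i * b i = 0"
    proof
      fix i
      from True show "a i * b i = 0"
      proof
        assume "SA = 0"
        hence "(a i)\<^sup>2 = 0" using nonneg_infsum_le_0D[OF _ as, of i] by (simp add: SA_def)
        thus ?thesis by simp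
      next
        assume "SB = 0"
        hence "(b i)\<^sup>2 = 0" using nonneg_infsum_le_0D[OF _ bs, of i] by (simp add: SB_def)
        thus ?thesis by simp
      qed
    qed
    hence "(\<lambda>i. a i * b i) = (\<lambda>i. 0)" by auto
    hence "(\<Sum>\<^sub>\<infinity>i. a i * b i) = 0" by simp
    thus ?thesis using SA0 SB0 by simp
  next
    case False
    define u where "u = sqrt SA"
    define v where "v = sqrt SB"
    have u0: "u > 0" using False SA0 by (simp add: u_def)
    have v0: "v > 0" using False SB0 by (simp add: v_def)
    have SAu: "SA = u\<^sup>2" using SA0 by (simp add: u_def)
    have SBv: "SB = v\<^sup>2" using SB0 by (simp add: v_def)
    define lam where "lam = v / u"
    have lam0: "lam > 0" using u0 v0 by (simp add: lam_def)
    have pw: "a i * b i \<le> (1/2) * (lam * (a i)\<^sup>2 + (1/lam) * (b i)\<^sup>2)" for i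
    proof -
      have "0 \<le> (lam * a i - b i)\<^sup>2" by simp
      hence "2 * lam * (a i * b i) \<le> lam\<^sup>2 * (a i)\<^sup>2 + (b i)\<^sup>2"
        by (simp add: power2_eq_square algebra_simps)
      hence "lam * (2 * (a i * b i)) \<le> lam * (lam * (a i)\<^sup>2 + (1/lam) * (b i)\<^sup>2)"
        using lam0 by (simp add: power2_eq_square algebra_simps)
      hence "2 * (a i * b i) \<le> lam * (a i)\<^sup>2 + (1/lam) * (b i)\<^sup>2"
        using lam0 by (rule mult_left_le_imp_le)
      thus ?thesis by simp
    qed
    have s1: "(\<lambda>i. lam * (a i)\<^sup>2) summable_on UNIV" using as by (rule summable_on_cmult_right)
    have s2: "(\<lambda>i. (1/lam) * (b i)\<^sup>2) summable_on UNIV" using bs by (rule summable_on_cmult_right)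
    have "(\<Sum>\<^sub>\<infinity>i. a i * b i) \<le> (\<Sum>\<^sub>\<infinity>i. (1/2) * (lam * (a i)\<^sup>2 + (1/lam) * (b i)\<^sup>2))"
      by (rule infsum_mono[OF ab summable_on_cmult_right[OF summable_on_add[OF s1 s2]] pw])
    also have "\<dots> = (1/2) * (lam * SA + (1/lam) * SB)"
      by (simp only: infsum_cmult_right[OF summable_on_add[OF s1 s2]] infsum_add[OF s1 s2]
           infsum_cmult_right[OF as] infsum_cmult_right[OF bs] SA_def SB_def)
    also have "\<dots> = u * v" unfolding SAu SBv lam_def using u0 v0 by (simp add: field_simps power2_eq_square)
    finally show ?thesis by (simp add: u_def v_def)
  qed
  thus "(\<Sum>\<^sub>\<infinity>i. a i * b i) \<le> sqrt (\<Sum>\<^sub>\<infinity>i. (a i)\<^sup>2) * sqrt (\<Sum>\<^sub>\<infinity>i. (b i)\<^sup>2)"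
    unfolding SA_def SB_def .
qed

lemma shift_has_sum:
  fixes y :: "int \<Rightarrow> 'b::topological_comm_monoid_add"
  shows "((\<lambda>j. y (n - j)) has_sum S) UNIV \<longleftrightarrow> (y has_sum S) UNIV"
    and "((\<lambda>j. y (j - n)) has_sum S) UNIV \<longleftrightarrow> (y has_sum S) UNIV"
  by (rule has_sum_reindex_bij_witness[of _ "\<lambda>j. n - j" "\<lambda>j. n - j"]; simp)
     (rule has_sum_reindex_bij_witness[of _ "\<lambda>j. j + n" "\<lambda>j. j - n"]; simp)

lemma young:
  fixes x y :: "int \<Rightarrow> real"
  assumes x0: "\<And>i. x i \<ge> 0" and y0: "\<And>i. y i \<ge> 0"
    and xs: "(\<lambda>i. (x i)\<^sup>2) summable_on UNIV" and ys: "y summable_on UNIV"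
  shows "\<And>n. (\<lambda>j. x j * y (n - j)) summable_on UNIV"
    and "(\<lambda>n. (\<Sum>\<^sub>\<infinity>j. x j * y (n - j))\<^sup>2) summable_on UNIV"
    and "(\<Sum>\<^sub>\<infinity>n. (\<Sum>\<^sub>\<infinity>j. x j * y (n - j))\<^sup>2) \<le> (\<Sum>\<^sub>\<infinity>i. (x i)\<^sup>2) * (\<Sum>\<^sub>\<infinity>i. y i)\<^sup>2"
    and "\<And>n. (\<lambda>j. y j * x (n - j)) summable_on UNIV"
    and "\<And>n. (\<Sum>\<^sub>\<infinity>j. y j * x (n - j)) = (\<Sum>\<^sub>\<infinity>j. x j * y (n - j))"
proof -
  define Y where "Y = (\<Sum>\<^sub>\<infinity>i. y i)"
  define X where "X = (\<Sum>\<^sub>\<infinity>i. (x i)\<^sup>2)"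
  have Yh: "(y has_sum Y) UNIV" using ys by (simp add: Y_def)
  have ybd: "y k \<le> Y" for k
    using finite_sum_le_infsum[OF ys, of "{k}"] y0 by (simp add: Y_def)
  have Y0: "Y \<ge> 0" using ybd[of 0] y0[of 0] by linarith
  have sh1: "((\<lambda>j. y (n - j)) has_sum Y) UNIV" for n using Yh shift_has_sum(1) by blast
  have sh2: "((\<lambda>m. y (m - j)) has_sum Y) UNIV" for j using Yh shift_has_sum(2) by blast
  have Ps: "(\<lambda>j. (x j)\<^sup>2 * y (n - j)) summable_on UNIV" for n
  proof (rule summable_on_comparison_test)
    show "(\<lambda>j. (x j)\<^sup>2 * Y) summable_on UNIV" using xs by (rule summable_on_cmult_left)
  qed (auto intro: mult_left_mono ybd y0 mult_nonneg_nonneg)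
  have conv: "(\<lambda>j. x j * y (n - j)) summable_on UNIV \<and>
      (\<Sum>\<^sub>\<infinity>j. x j * y (n - j))\<^sup>2 \<le> (\<Sum>\<^sub>\<infinity>j. (x j)\<^sup>2 * y (n - j)) * Y" for n
  proof -
    define a where "a = (\<lambda>j. x j * sqrt (y (n - j)))"
    define b where "b = (\<lambda>j. sqrt (y (n - j)))"
    have a2: "(\<lambda>j. (a j)\<^sup>2) = (\<lambda>j. (x j)\<^sup>2 * y (n - j))"
      using y0 by (auto simp: a_def power_mult_distrib)
    have b2: "(\<lambda>j. (b j)\<^sup>2) = (\<lambda>j. y (n - j))"
      using y0 by (auto simp: b_def)
    have ab: "(\<lambda>j. a j * b j) = (\<lambda>j. x j * y (n - j))"
      using y0 by (auto simp: a_def b_def mult.assoc)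
    have as: "(\<lambda>j. (a j)\<^sup>2) summable_on UNIV" using Ps a2 by simp
    have bs: "(\<lambda>j. (b j)\<^sup>2) summable_on UNIV" using has_sum_imp_summable[OF sh1[of n]] b2 by simp
    have a0: "a j \<ge> 0" for j using x0 y0 by (simp add: a_def)
    have b0: "b j \<ge> 0" for j using y0 by (simp add: b_def)
    note C = cs_infsum[OF a0 b0 as bs]
    have s: "(\<lambda>j. x j * y (n - j)) summable_on UNIV" using C(1) ab by simp
    have "(\<Sum>\<^sub>\<infinity>j. x j * y (n - j)) \<le> sqrt (\<Sum>\<^sub>\<infinity>j. (x j)\<^sup>2 * y (n - j)) * sqrt Y"
    proof -
      have "(\<Sum>\<^sub>\<infinity>j. y (n - j)) = Y" by (rule infsumI[OF sh1])
      thus ?thesis using C(2) unfolding ab a2 b2 by simp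
    qed
    moreover have "(\<Sum>\<^sub>\<infinity>j. x j * y (n - j)) \<ge> 0" by (rule infsum_nonneg) (use x0 y0 in auto)
    moreover have "(\<Sum>\<^sub>\<infinity>j. (x j)\<^sup>2 * y (n - j)) \<ge> 0" by (rule infsum_nonneg) (use y0 in auto)
    ultimately have "(\<Sum>\<^sub>\<infinity>j. x j * y (n - j))\<^sup>2 \<le> (sqrt (\<Sum>\<^sub>\<infinity>j. (x j)\<^sup>2 * y (n - j)) * sqrt Y)\<^sup>2"
      by (intro power_mono) auto
    also have "\<dots> = (\<Sum>\<^sub>\<infinity>j. (x j)\<^sup>2 * y (n - j)) * Y"
      using Y0 \<open>(\<Sum>\<^sub>\<infinity>j. (x j)\<^sup>2 * y (n - j)) \<ge> 0\<close> by (simp add: power_mult_distrib)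
    finally show ?thesis using s by simp
  qed
  show "\<And>n. (\<lambda>j. x j * y (n - j)) summable_on UNIV" using conv by blast
  define G where "G = (\<lambda>(j::int, m::int). (x j)\<^sup>2 * y (m - j))"
  have Gj: "((\<lambda>m. G (j, m)) has_sum (x j)\<^sup>2 * Y) UNIV" for j
    unfolding G_def using has_sum_cmult_right[OF sh2[of j], of "(x j)\<^sup>2"] by simp
  have GS: "G summable_on (UNIV \<times> UNIV)"
    by (rule summable_on_SigmaI[OF Gj summable_on_cmult_left[OF xs]]) (auto simp: G_def y0)
  have GS': "(\<lambda>(m, j). (x j)\<^sup>2 * y (m - j)) summable_on (UNIV \<times> UNIV)"
    using GS summable_on_swap[of G UNIV UNIV] by (simp add: G_def case_prod_unfold)
  have Psum: "(\<lambda>m. \<Sum>\<^sub>\<infinity>j. (x j)\<^sup>2 * y (m - j)) summable_on UNIV"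
    using summable_on_Sigma_banach[of "\<lambda>m j. (x j)\<^sup>2 * y (m - j)" UNIV "\<lambda>_. UNIV"] GS' by simp
  have "(\<Sum>\<^sub>\<infinity>m. \<Sum>\<^sub>\<infinity>j. (x j)\<^sup>2 * y (m - j)) = (\<Sum>\<^sub>\<infinity>j. \<Sum>\<^sub>\<infinity>m. (x j)\<^sup>2 * y (m - j))"
    by (rule infsum_swap_banach[OF GS'])
  also have "\<dots> = (\<Sum>\<^sub>\<infinity>j. (x j)\<^sup>2 * Y)"
  proof -
    have "(\<Sum>\<^sub>\<infinity>m. (x j)\<^sup>2 * y (m - j)) = (x j)\<^sup>2 * Y" for j
      using infsumI[OF Gj[of j]] by (simp add: G_def)
    thus ?thesis by simp
  qed
  also have "\<dots> = X * Y" by (simp add: X_def infsum_cmult_left[OF xs])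
  finally have Pval: "(\<Sum>\<^sub>\<infinity>m. \<Sum>\<^sub>\<infinity>j. (x j)\<^sup>2 * y (m - j)) = X * Y" .
  have PY: "(\<lambda>m. (\<Sum>\<^sub>\<infinity>j. (x j)\<^sup>2 * y (m - j)) * Y) summable_on UNIV"
    using Psum by (rule summable_on_cmult_left)
  show cs: "(\<lambda>n. (\<Sum>\<^sub>\<infinity>j. x j * y (n - j))\<^sup>2) summable_on UNIV"
    by (rule summable_on_comparison_test[OF PY]) (use conv in auto)
  have "(\<Sum>\<^sub>\<infinity>n. (\<Sum>\<^sub>\<infinity>j. x j * y (n - j))\<^sup>2) \<le> (\<Sum>\<^sub>\<infinity>m. (\<Sum>\<^sub>\<infinity>j. (x j)\<^sup>2 * y (m - j)) * Y)"
    by (rule infsum_mono[OF cs PY]) (use conv in auto)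
  also have "\<dots> = X * Y * Y" by (simp add: infsum_cmult_left[OF Psum] Pval)
  finally show "(\<Sum>\<^sub>\<infinity>n. (\<Sum>\<^sub>\<infinity>j. x j * y (n - j))\<^sup>2) \<le> (\<Sum>\<^sub>\<infinity>i. (x i)\<^sup>2) * (\<Sum>\<^sub>\<infinity>i. y i)\<^sup>2"
    by (simp add: X_def Y_def power2_eq_square mult.assoc)
  show "\<And>n. (\<lambda>j. y j * x (n - j)) summable_on UNIV"
  proof -
    fix n
    have "(\<lambda>j. x j * y (n - j)) summable_on UNIV" using conv by blast
    thus "(\<lambda>j. y j * x (n - j)) summable_on UNIV"
      by (subst summable_on_reindex_bij_witness[of UNIV "\<lambda>j. n - j" "\<lambda>j. n - j" UNIV "\<lambda>j. x j * y (n - j)"]) (auto simp: mult.commute)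
  qed
  show "(\<Sum>\<^sub>\<infinity>j. y j * x (n - j)) = (\<Sum>\<^sub>\<infinity>j. x j * y (n - j))" for n
    by (rule infsum_reindex_bij_witness[of UNIV "\<lambda>j. n - j" "\<lambda>j. n - j"]) (auto simp: mult.commute)
qed

lemma wsum_nat:
  assumes "s > 0"
  shows "summable (\<lambda>n::nat. (1 + (real n)\<^sup>2) powr (-(1/2 + s)))"
proof (rule summable_comparison_test')
  show "summable (\<lambda>n::nat. (real n) powr (-(1 + 2 * s)))"
    using assms by (subst summable_real_powr_iff) auto
  fix n :: nat assume n: "n \<ge> 1"
  have "norm ((1 + (real n)\<^sup>2) powr (-(1/2 + s))) = (1 + (real n)\<^sup>2) powr (-(1/2 + s))" by simp
  also have "\<dots> \<le> ((real n)\<^sup>2) powr (-(1/2 + s))"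
    using n assms by (intro powr_mono2') auto
  also have "((real n)\<^sup>2) powr (-(1/2 + s)) = real n powr (-(1 + 2 * s))"
  proof -
    have "(real n)\<^sup>2 = real n powr 2" using n by (simp add: powr_numeral)
    hence "((real n)\<^sup>2) powr (-(1/2 + s)) = (real n powr 2) powr (-(1/2 + s))" by (simp only:)
    also have "\<dots> = real n powr (2 * (-(1/2 + s)))" by (rule powr_powr)
    finally have "((real n)\<^sup>2) powr (-(1/2 + s)) = real n powr (2 * (-(1/2 + s)))" .
    moreover have "2 * (-(1/2 + s)) = -(1 + 2 * s)" by simp
    ultimately show ?thesis by metis
  qed
  finally show "norm ((1 + (real n)\<^sup>2) powr (-(1/2 + s))) \<le> real n powr (-(1 + 2 * s))" .
qed

lemma wsum_int:
  assumes "s > 0"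
  shows "(\<lambda>n::int. (wt (-(1/2 + s)) (real_of_int n))\<^sup>2) summable_on UNIV"
proof -
  define f where "f = (\<lambda>n::int. (wt (-(1/2 + s)) (real_of_int n))\<^sup>2)"
  have fe: "f n = (1 + (real_of_int n)\<^sup>2) powr (-(1/2 + s))" for n by (simp add: f_def wt_sq)
  have sn: "(\<lambda>n::nat. (1 + (real n)\<^sup>2) powr (-(1/2 + s))) summable_on UNIV"
    using wsum_nat[OF assms] by (subst summable_on_UNIV_nonneg_real_iff) auto
  have s1: "f summable_on (int ` UNIV)"
    by (subst summable_on_reindex) (use sn in \<open>auto simp: o_def fe\<close>)
  have s2: "f summable_on ((\<lambda>n. - int n) ` UNIV)"
    by (subst summable_on_reindex) (use sn in \<open>auto simp: o_def fe inj_on_def\<close>)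
  have U: "UNIV = int ` UNIV \<union> (\<lambda>n. - int n) ` UNIV"
  proof -
    have "i \<in> int ` UNIV \<union> (\<lambda>n. - int n) ` UNIV" for i :: int
    proof (cases "i \<ge> 0")
      case True thus ?thesis by (auto intro: image_eqI[of _ _ "nat i"])
    next
      case False thus ?thesis by (auto intro!: image_eqI[of _ _ "nat (-i)"])
    qed
    thus ?thesis by blast
  qed
  have "f summable_on (int ` UNIV \<union> (\<lambda>n. - int n) ` UNIV)" by (rule summable_on_union[OF s1 s2])
  thus ?thesis using U by (simp add: f_def)
qed

lemma l1_bound:
  fixes c :: "int \<Rightarrow> complex"
  assumes s: "s > 0"
    and cs: "(\<lambda>n. (wt (r + 1/2 + s) (real_of_int n) * cmod (c n))\<^sup>2) summable_on UNIV"
  shows "(\<lambda>n. wt r (real_of_int n) * cmod (c n)) summable_on UNIV"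
    and "(\<Sum>\<^sub>\<infinity>n. wt r (real_of_int n) * cmod (c n)) \<le>
         sqrt (\<Sum>\<^sub>\<infinity>n. (wt (-(1/2 + s)) (real_of_int n))\<^sup>2) *
         sqrt (\<Sum>\<^sub>\<infinity>n. (wt (r + 1/2 + s) (real_of_int n) * cmod (c n))\<^sup>2)"
proof -
  have e: "wt (-(1/2 + s)) (real_of_int n) * (wt (r + 1/2 + s) (real_of_int n) * cmod (c n))
      = wt r (real_of_int n) * cmod (c n)" for n
    by (simp add: mult.assoc[symmetric] wt_mult)
  have a0: "\<And>n. 0 \<le> wt (-(1/2 + s)) (real_of_int n)" by (simp add: wt_pos less_imp_le)
  have b0: "\<And>n. 0 \<le> wt (r + 1/2 + s) (real_of_int n) * cmod (c n)" by (simp add: wt_pos less_imp_le)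
  note C = cs_infsum[of "\<lambda>n. wt (-(1/2 + s)) (real_of_int n)" "\<lambda>n. wt (r + 1/2 + s) (real_of_int n) * cmod (c n)",
      OF a0 b0 wsum_int[OF s] cs]
  show "(\<lambda>n. wt r (real_of_int n) * cmod (c n)) summable_on UNIV"
    using C(1) unfolding e .
  show "(\<Sum>\<^sub>\<infinity>n. wt r (real_of_int n) * cmod (c n)) \<le>
         sqrt (\<Sum>\<^sub>\<infinity>n. (wt (-(1/2 + s)) (real_of_int n))\<^sup>2) *
         sqrt (\<Sum>\<^sub>\<infinity>n. (wt (r + 1/2 + s) (real_of_int n) * cmod (c n))\<^sup>2)"
    using C(2) unfolding e .
qed

lemma inH_iff: "in_H s a \<longleftrightarrow> (\<lambda>n. (wt s (real_of_int n) * cmod (a n))\<^sup>2) summable_on UNIV"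
  unfolding in_H_def by (simp add: power_mult_distrib wt_sq)

lemma Hn_eq: "H_norm s a = sqrt (\<Sum>\<^sub>\<infinity>n. (wt s (real_of_int n) * cmod (a n))\<^sup>2)"
  unfolding H_norm_def by (simp add: power_mult_distrib wt_sq)

lemma summable_by_bound:
  fixes T :: "'a \<Rightarrow> complex" and F :: "'a \<Rightarrow> real"
  assumes "F summable_on UNIV" "\<And>j. norm (T j) \<le> c * F j"
  shows "(\<lambda>j. norm (T j)) summable_on UNIV" "T summable_on UNIV"
proof -
  have "(\<lambda>j. c * F j) summable_on UNIV" using assms(1) by (rule summable_on_cmult_right)
  hence "(\<lambda>j. norm (c * F j)) summable_on UNIV"
    using summable_on_comparison_test[of "\<lambda>j. c * F j" UNIV "\<lambda>j. norm (c * F j)"] assms(2)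
    by (smt (verit) norm_ge_zero real_norm_def summable_on_cong)
  thus "(\<lambda>j. norm (T j)) summable_on UNIV"
    by (rule summable_on_comparison_test) (use assms(2) in \<open>auto intro: order.trans[OF _ abs_ge_self]\<close>)
  thus "T summable_on UNIV" by (rule abs_summable_summable)
qed

lemma term_bound:
  fixes f g :: "int \<Rightarrow> complex"
  assumes p: "p \<ge> 0" and qm: "q + real m \<ge> 0" and pq: "p + q \<le> k" and m: "m \<ge> 1"
  shows "norm ((Dsym p j * f j) * (Dsym q (n - j) * ((\<i> * of_int (n - j))^m * g (n - j))))
     \<le> (2 powr ((q + real m)/2) * wt (q + real m) (real_of_int n)) *
        ((wt (k + real m) (real_of_int j) * cmod (f j)) * cmod (g (n - j)))"
proof -
  define s where "s = q + real m"
  have "norm ((Dsym p j * f j) * (Dsym q (n - j) * ((\<i> * of_int (n - j))^m * g (n - j))))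
      = norm (Dsym p j) * cmod (f j) * norm (Dsym q (n - j) * (\<i> * of_int (n - j))^m) * cmod (g (n - j))"
    by (simp add: norm_mult mult_ac)
  also have "\<dots> \<le> wt p (real_of_int j) * cmod (f j) *
      (2 powr (s/2) * (wt s (real_of_int n) * wt s (real_of_int j))) * cmod (g (n - j))"
  proof (intro mult_right_mono mult_mono)
    show "norm (Dsym p j) \<le> wt p (real_of_int j)" by (rule norm_Dsym_le[OF p])
    have "norm (Dsym q (n - j) * (\<i> * of_int (n - j))^m) \<le> wt s (real_of_int (n - j))"
      unfolding s_def by (rule norm_Dsym_dx[OF m qm])
    also have "\<dots> = wt s (real_of_int n + (- real_of_int j))" by simp
    also have "\<dots> \<le> 2 powr (s/2) * (wt s (real_of_int n) * wt s (- real_of_int j))"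
      by (rule wt_peetre) (use qm in \<open>simp add: s_def\<close>)
    finally show "norm (Dsym q (n - j) * (\<i> * of_int (n - j))^m) \<le> 2 powr (s/2) * (wt s (real_of_int n) * wt s (real_of_int j))"
      by simp
  qed (auto simp: wt_pos less_imp_le)
  also have "\<dots> = (2 powr (s/2) * wt s (real_of_int n)) * ((wt p (real_of_int j) * wt s (real_of_int j)) * cmod (f j) * cmod (g (n - j)))"
    by (simp add: mult_ac)
  also have "\<dots> \<le> (2 powr (s/2) * wt s (real_of_int n)) * ((wt (k + real m) (real_of_int j)) * cmod (f j) * cmod (g (n - j)))"
  proof -
    have "wt p (real_of_int j) * wt s (real_of_int j) \<le> wt (k + real m) (real_of_int j)"
      unfolding wt_mult by (rule wt_exp_mono) (use pq in \<open>simp add: s_def\<close>)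
    thus ?thesis by (intro mult_left_mono mult_right_mono) (auto simp: wt_pos less_imp_le)
  qed
  finally show ?thesis by (simp add: s_def mult_ac)
qed

lemma pointwise_id:
  fixes f g :: "int \<Rightarrow> complex"
  shows "Dsym k n * (f j * ((\<i> * of_int (n - j))^m * g (n - j)))
     - (\<Sum>l<m. complex_of_real (k gchoose l) *
         ((Dsym (real l) j * f j) * (Dsym (k - real l) (n - j) * ((\<i> * of_int (n - j))^m * g (n - j)))))
     = f j * g (n - j) * Kf k m j (n - j)"
proof -
  have "(\<Sum>l<m. complex_of_real (k gchoose l) *
         ((Dsym (real l) j * f j) * (Dsym (k - real l) (n - j) * ((\<i> * of_int (n - j))^m * g (n - j)))))
      = f j * g (n - j) * (\<Sum>l<m. complex_of_real (k gchoose l) *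
         (Dsym (real l) j * (Dsym (k - real l) (n - j) * (\<i> * of_int (n - j))^m)))"
    by (simp add: sum_distrib_left mult_ac)
  thus ?thesis by (simp add: Kf_def algebra_simps)
qed

lemma Hn_nonneg: "H_norm s a \<ge> 0"
  unfolding H_norm_def by (intro real_sqrt_ge_zero infsum_nonneg) auto

theorem lemma3:
  fixes k' \<eta> :: real and m :: nat
  assumes "k' \<ge> 0" and "m \<ge> 1" and "\<eta> > 0"
  shows "\<exists>C. \<forall>f g :: int \<Rightarrow> complex.
     in_H (k' + real m) f \<and> in_H (real m + 1/2 + \<eta>) f \<and>
     in_H (1/2 + \<eta>) g \<and> in_H k' g \<longrightarrow>
     (let E = (\<lambda>n. Dop k' (fprod f (dx m g)) n
                 - (\<Sum>l<m. complex_of_real (k' gchoose l) *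
                      fprod (Dop (real l) f) (Dop (k' - real l) (dx m g)) n))
      in in_H 0 E \<and>
         H_norm 0 E \<le> C * (H_norm (k' + real m) f * H_norm (1/2 + \<eta>) g
                          + H_norm (real m + 1/2 + \<eta>) f * H_norm k' g))"
proof -
  note k = assms(1) and m = assms(2) and eta = assms(3)
  obtain CK where CK0: "CK \<ge> 0" and KB: "\<And>a b. norm (Kf k' m a b) \<le>
     CK * (wt (k' + real m) (real_of_int a) + wt (real m) (real_of_int a) * wt k' (real_of_int b))"
    using kernel_bound[OF k m] by blast
  define Cs where "Cs = sqrt (\<Sum>\<^sub>\<infinity>n::int. (wt (-(1/2 + \<eta>)) (real_of_int n))\<^sup>2)"
  have Cs0: "Cs \<ge> 0" unfolding Cs_def by (intro real_sqrt_ge_zero infsum_nonneg) auto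
  show ?thesis
  proof (intro exI[of _ "sqrt 2 * CK * Cs"] allI impI)
    fix f g :: "int \<Rightarrow> complex"
    assume H: "in_H (k' + real m) f \<and> in_H (real m + 1/2 + \<eta>) f \<and> in_H (1/2 + \<eta>) g \<and> in_H k' g"
    define E where "E = (\<lambda>n. Dop k' (fprod f (dx m g)) n
                 - (\<Sum>l<m. complex_of_real (k' gchoose l) *
                      fprod (Dop (real l) f) (Dop (k' - real l) (dx m g)) n))"
    define F1 where "F1 = (\<lambda>j. wt (k' + real m) (real_of_int j) * cmod (f j))"
    define G1 where "G1 = (\<lambda>j. cmod (g j))"
    define F2 where "F2 = (\<lambda>j. wt (real m) (real_of_int j) * cmod (f j))"
    define G2 where "G2 = (\<lambda>j. wt k' (real_of_int j) * cmod (g j))"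
    define Hf1 where "Hf1 = H_norm (k' + real m) f"
    define Hf2 where "Hf2 = H_norm (real m + 1/2 + \<eta>) f"
    define Hg1 where "Hg1 = H_norm (1/2 + \<eta>) g"
    define Hg2 where "Hg2 = H_norm k' g"
    have F1nn: "\<And>j. F1 j \<ge> 0" and G1nn: "\<And>j. G1 j \<ge> 0" and F2nn: "\<And>j. F2 j \<ge> 0" and G2nn: "\<And>j. G2 j \<ge> 0"
      by (auto simp: F1_def G1_def F2_def G2_def wt_pos less_imp_le)
    have F1s: "(\<lambda>j. (F1 j)\<^sup>2) summable_on UNIV" using H by (simp add: inH_iff F1_def)
    have G2s: "(\<lambda>j. (G2 j)\<^sup>2) summable_on UNIV" using H by (simp add: inH_iff G2_def)
    have F1v: "(\<Sum>\<^sub>\<infinity>j. (F1 j)\<^sup>2) = Hf1\<^sup>2"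
      unfolding Hf1_def Hn_eq F1_def by (rule real_sqrt_pow2[symmetric]) (auto intro: infsum_nonneg)
    have G2v: "(\<Sum>\<^sub>\<infinity>j. (G2 j)\<^sup>2) = Hg2\<^sup>2"
      unfolding Hg2_def Hn_eq G2_def by (rule real_sqrt_pow2[symmetric]) (auto intro: infsum_nonneg)
    have gH: "(\<lambda>n. (wt (0 + 1/2 + \<eta>) (real_of_int n) * cmod (g n))\<^sup>2) summable_on UNIV"
      using H by (simp add: inH_iff)
    have fH: "(\<lambda>n. (wt (real m + 1/2 + \<eta>) (real_of_int n) * cmod (f n))\<^sup>2) summable_on UNIV"
      using H by (simp add: inH_iff)
    have G1s: "G1 summable_on UNIV" using l1_bound(1)[OF eta gH] by (simp add: G1_def)
    have G1b: "(\<Sum>\<^sub>\<infinity>j. G1 j) \<le> Cs * Hg1"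
      using l1_bound(2)[OF eta gH] by (simp add: G1_def Cs_def Hg1_def Hn_eq)
    have F2s: "F2 summable_on UNIV" using l1_bound(1)[OF eta fH] by (simp add: F2_def)
    have F2b: "(\<Sum>\<^sub>\<infinity>j. F2 j) \<le> Cs * Hf2"
      using l1_bound(2)[OF eta fH] by (simp add: F2_def Cs_def Hf2_def Hn_eq)
    note Y1 = young[OF F1nn G1nn F1s G1s]
    note Y2 = young[OF G2nn F2nn G2s F2s]
    define c1 where "c1 = (\<lambda>n. \<Sum>\<^sub>\<infinity>j. F1 j * G1 (n - j))"
    define c2 where "c2 = (\<lambda>n. \<Sum>\<^sub>\<infinity>j. F2 j * G2 (n - j))"
    have c2': "c2 n = (\<Sum>\<^sub>\<infinity>j. G2 j * F2 (n - j))" for n unfolding c2_def by (rule Y2(5))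
    have c1nn: "c1 n \<ge> 0" for n unfolding c1_def by (intro infsum_nonneg mult_nonneg_nonneg F1nn G1nn)
    have c2nn: "c2 n \<ge> 0" for n unfolding c2_def by (intro infsum_nonneg mult_nonneg_nonneg F2nn G2nn)
    have Ebound: "norm (E n) \<le> CK * (c1 n + c2 n)" for n
    proof -
      define T0 where "T0 = (\<lambda>j. f j * ((\<i> * of_int (n - j))^m * g (n - j)))"
      define TL where "TL = (\<lambda>l j. (Dsym (real l) j * f j) *
          (Dsym (k' - real l) (n - j) * ((\<i> * of_int (n - j))^m * g (n - j))))"
      define cc where "cc = (\<lambda>l. complex_of_real (k' gchoose l))"
      have Eeq: "E n = Dsym k' n * (\<Sum>\<^sub>\<infinity>j. T0 j) - (\<Sum>l<m. cc l * (\<Sum>\<^sub>\<infinity>j. TL l j))"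
        unfolding E_def Dop_def fprod_def dx_def T0_def TL_def cc_def by simp
      have P1: "(\<lambda>j. F1 j * G1 (n - j)) summable_on UNIV" by (rule Y1(1))
      have P2: "(\<lambda>j. F2 j * G2 (n - j)) summable_on UNIV" by (rule Y2(4))
      have T0s: "T0 summable_on UNIV"
      proof (rule summable_by_bound(2)[OF P1])
        fix j
        have "T0 j = (Dsym 0 j * f j) * (Dsym 0 (n - j) * ((\<i> * of_int (n - j))^m * g (n - j)))"
          by (simp add: T0_def Dsym_def)
        also have "norm \<dots> \<le> (2 powr ((0 + real m)/2) * wt (0 + real m) (real_of_int n)) *
            ((wt (k' + real m) (real_of_int j) * cmod (f j)) * cmod (g (n - j)))"
          by (rule term_bound) (use k m in auto)
        finally show "norm (T0 j) \<le> (2 powr ((0 + real m)/2) * wt (0 + real m) (real_of_int n)) * (F1 j * G1 (n - j))"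
          by (simp add: F1_def G1_def)
      qed
      have TLs: "TL l summable_on UNIV" if l: "l < m" for l
      proof (rule summable_by_bound(2)[OF P1])
        fix j
        have "norm (TL l j) \<le> (2 powr ((k' - real l + real m)/2) * wt (k' - real l + real m) (real_of_int n)) *
            ((wt (k' + real m) (real_of_int j) * cmod (f j)) * cmod (g (n - j)))"
          unfolding TL_def by (rule term_bound) (use k m l in auto)
        thus "norm (TL l j) \<le> (2 powr ((k' - real l + real m)/2) * wt (k' - real l + real m) (real_of_int n)) * (F1 j * G1 (n - j))"
          by (simp add: F1_def G1_def)
      qed
      have h1: "((\<lambda>j. Dsym k' n * T0 j) has_sum (Dsym k' n * (\<Sum>\<^sub>\<infinity>j. T0 j))) UNIV"
        by (rule has_sum_cmult_right) (use T0s in simp)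
      have h2: "((\<lambda>j. \<Sum>l<m. cc l * TL l j) has_sum (\<Sum>l<m. cc l * (\<Sum>\<^sub>\<infinity>j. TL l j))) UNIV"
        by (rule has_sum_finsum) (auto intro!: has_sum_cmult_right has_sum_infsum TLs)
      have h3: "((\<lambda>j. Dsym k' n * T0 j - (\<Sum>l<m. cc l * TL l j)) has_sum E n) UNIV"
      proof -
        have "((\<lambda>j. - (\<Sum>l<m. cc l * TL l j)) has_sum - (\<Sum>l<m. cc l * (\<Sum>\<^sub>\<infinity>j. TL l j))) UNIV"
          using h2 by (simp add: has_sum_uminus)
        from has_sum_add[OF h1 this] show ?thesis by (simp add: Eeq)
      qed
      define S where "S = (\<lambda>j. f j * g (n - j) * Kf k' m j (n - j))"
      have SE: "(S has_sum E n) UNIV"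
      proof -
        have "(\<lambda>j. Dsym k' n * T0 j - (\<Sum>l<m. cc l * TL l j)) = S"
          unfolding S_def T0_def TL_def cc_def by (rule ext) (rule pointwise_id)
        thus ?thesis using h3 by simp
      qed
      define B where "B = (\<lambda>j. CK * (F1 j * G1 (n - j)) + CK * (F2 j * G2 (n - j)))"
      have Bs: "B summable_on UNIV"
        unfolding B_def by (intro summable_on_add summable_on_cmult_right P1 P2)
      have SB: "norm (S j) \<le> 1 * B j" for j
      proof -
        have "norm (S j) = cmod (f j) * cmod (g (n - j)) * norm (Kf k' m j (n - j))"
          by (simp add: S_def norm_mult)
        also have "\<dots> \<le> cmod (f j) * cmod (g (n - j)) * (CK * (wt (k' + real m) (real_of_int j) +
            wt (real m) (real_of_int j) * wt k' (real_of_int (n - j))))"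
          by (intro mult_left_mono KB) auto
        also have "\<dots> = B j"
          by (simp add: B_def F1_def G1_def F2_def G2_def algebra_simps)
        finally show ?thesis by simp
      qed
      have Sn: "(\<lambda>j. norm (S j)) summable_on UNIV" by (rule summable_by_bound(1)[OF Bs SB])
      have "norm (E n) = norm (\<Sum>\<^sub>\<infinity>j. S j)" using SE by (simp add: infsumI)
      also have "\<dots> \<le> (\<Sum>\<^sub>\<infinity>j. norm (S j))" by (rule Infinite_Sum.norm_infsum_bound[OF Sn])
      also have "\<dots> \<le> (\<Sum>\<^sub>\<infinity>j. B j)" by (rule infsum_mono[OF Sn Bs]) (use SB in simp)
      also have "\<dots> = CK * (c1 n + c2 n)"
        unfolding B_def c1_def c2_def
        by (simp add: infsum_add summable_on_cmult_right P1 P2 infsum_cmult_right distrib_left)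
      finally show ?thesis .
    qed
    have Esq: "(norm (E n))\<^sup>2 \<le> 2 * CK\<^sup>2 * ((c1 n)\<^sup>2 + (c2 n)\<^sup>2)" for n
    proof -
      have "(norm (E n))\<^sup>2 \<le> (CK * (c1 n + c2 n))\<^sup>2"
        using Ebound[of n] by (intro power_mono) auto
      also have "\<dots> \<le> 2 * CK\<^sup>2 * ((c1 n)\<^sup>2 + (c2 n)\<^sup>2)"
      proof -
        have "(c1 n + c2 n)\<^sup>2 \<le> 2 * ((c1 n)\<^sup>2 + (c2 n)\<^sup>2)"
          using sum_squares_bound[of "c1 n" "c2 n"] by (simp add: power2_eq_square algebra_simps)
        hence "CK\<^sup>2 * (c1 n + c2 n)\<^sup>2 \<le> CK\<^sup>2 * (2 * ((c1 n)\<^sup>2 + (c2 n)\<^sup>2))"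
          by (rule mult_left_mono) simp
        moreover have "(CK * (c1 n + c2 n))\<^sup>2 = CK\<^sup>2 * (c1 n + c2 n)\<^sup>2" by (rule power_mult_distrib)
        moreover have "2 * CK\<^sup>2 * ((c1 n)\<^sup>2 + (c2 n)\<^sup>2) = CK\<^sup>2 * (2 * ((c1 n)\<^sup>2 + (c2 n)\<^sup>2))" by simp
        ultimately show ?thesis by metis
      qed
      finally show ?thesis .
    qed
    have c1s: "(\<lambda>n. (c1 n)\<^sup>2) summable_on UNIV" using Y1(2) by (simp add: c1_def)
    have c2s: "(\<lambda>n. (c2 n)\<^sup>2) summable_on UNIV" using Y2(2) by (simp add: c2')
    have c1v: "(\<Sum>\<^sub>\<infinity>n. (c1 n)\<^sup>2) \<le> Hf1\<^sup>2 * (Cs * Hg1)\<^sup>2"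
    proof -
      have "(\<Sum>\<^sub>\<infinity>n. (c1 n)\<^sup>2) \<le> (\<Sum>\<^sub>\<infinity>j. (F1 j)\<^sup>2) * (\<Sum>\<^sub>\<infinity>j. G1 j)\<^sup>2"
        using Y1(3) by (simp add: c1_def)
      also have "\<dots> \<le> Hf1\<^sup>2 * (Cs * Hg1)\<^sup>2"
        unfolding F1v by (intro mult_left_mono power_mono G1b infsum_nonneg G1nn) auto
      finally show ?thesis .
    qed
    have c2v: "(\<Sum>\<^sub>\<infinity>n. (c2 n)\<^sup>2) \<le> Hg2\<^sup>2 * (Cs * Hf2)\<^sup>2"
    proof -
      have "(\<Sum>\<^sub>\<infinity>n. (c2 n)\<^sup>2) \<le> (\<Sum>\<^sub>\<infinity>j. (G2 j)\<^sup>2) * (\<Sum>\<^sub>\<infinity>j. F2 j)\<^sup>2"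
        using Y2(3) by (simp add: c2')
      also have "\<dots> \<le> Hg2\<^sup>2 * (Cs * Hf2)\<^sup>2"
        unfolding G2v by (intro mult_left_mono power_mono F2b infsum_nonneg F2nn) auto
      finally show ?thesis .
    qed
    have cs12: "(\<lambda>n. 2 * CK\<^sup>2 * ((c1 n)\<^sup>2 + (c2 n)\<^sup>2)) summable_on UNIV"
      by (intro summable_on_cmult_right summable_on_add c1s c2s)
    have Es: "(\<lambda>n. (norm (E n))\<^sup>2) summable_on UNIV"
      by (rule summable_on_comparison_test[OF cs12]) (use Esq in auto)
    have "(\<Sum>\<^sub>\<infinity>n. (norm (E n))\<^sup>2) \<le> (\<Sum>\<^sub>\<infinity>n. 2 * CK\<^sup>2 * ((c1 n)\<^sup>2 + (c2 n)\<^sup>2))"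
      by (rule infsum_mono[OF Es cs12 Esq])
    also have "\<dots> = 2 * CK\<^sup>2 * ((\<Sum>\<^sub>\<infinity>n. (c1 n)\<^sup>2) + (\<Sum>\<^sub>\<infinity>n. (c2 n)\<^sup>2))"
      by (simp add: infsum_cmult_right[OF summable_on_add[OF c1s c2s]] infsum_add[OF c1s c2s])
    also have "\<dots> \<le> 2 * CK\<^sup>2 * (Hf1\<^sup>2 * (Cs * Hg1)\<^sup>2 + Hg2\<^sup>2 * (Cs * Hf2)\<^sup>2)"
      by (intro mult_left_mono add_mono c1v c2v) auto
    also have "\<dots> = (sqrt 2 * CK * Cs)\<^sup>2 * ((Hf1 * Hg1)\<^sup>2 + (Hf2 * Hg2)\<^sup>2)"
      by (simp add: power_mult_distrib algebra_simps)
    also have "\<dots> \<le> (sqrt 2 * CK * Cs)\<^sup>2 * (Hf1 * Hg1 + Hf2 * Hg2)\<^sup>2"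
    proof -
      have "Hf1 * Hg1 \<ge> 0" "Hf2 * Hg2 \<ge> 0"
        by (simp_all add: Hf1_def Hf2_def Hg1_def Hg2_def Hn_nonneg)
      hence "0 \<le> 2 * ((Hf1 * Hg1) * (Hf2 * Hg2))" by simp
      moreover have "(Hf1 * Hg1 + Hf2 * Hg2)\<^sup>2 = (Hf1 * Hg1)\<^sup>2 + (Hf2 * Hg2)\<^sup>2 + 2 * ((Hf1 * Hg1) * (Hf2 * Hg2))"
        by (simp add: power2_eq_square algebra_simps)
      ultimately have "(Hf1 * Hg1)\<^sup>2 + (Hf2 * Hg2)\<^sup>2 \<le> (Hf1 * Hg1 + Hf2 * Hg2)\<^sup>2"
        by linarith
      thus ?thesis by (intro mult_left_mono) auto
    qed
    also have "\<dots> = (sqrt 2 * CK * Cs * (Hf1 * Hg1 + Hf2 * Hg2))\<^sup>2"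
      by (simp add: power_mult_distrib)
    finally have fin: "(\<Sum>\<^sub>\<infinity>n. (norm (E n))\<^sup>2) \<le> (sqrt 2 * CK * Cs * (Hf1 * Hg1 + Hf2 * Hg2))\<^sup>2" .
    have inE: "in_H 0 E" using Es by (simp add: inH_iff)
    have "H_norm 0 E = sqrt (\<Sum>\<^sub>\<infinity>n. (norm (E n))\<^sup>2)" by (simp add: Hn_eq)
    also have "\<dots> \<le> sqrt ((sqrt 2 * CK * Cs * (Hf1 * Hg1 + Hf2 * Hg2))\<^sup>2)"
      using fin by (rule real_sqrt_le_mono)
    also have "\<dots> = sqrt 2 * CK * Cs * (Hf1 * Hg1 + Hf2 * Hg2)"
    proof -
      have "Hf1 * Hg1 \<ge> 0" "Hf2 * Hg2 \<ge> 0"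
        by (simp_all add: Hf1_def Hf2_def Hg1_def Hg2_def Hn_nonneg)
      thus ?thesis using CK0 Cs0 by simp
    qed
    finally have "H_norm 0 E \<le> sqrt 2 * CK * Cs * (Hf1 * Hg1 + Hf2 * Hg2)" .
    thus "let E = (\<lambda>n. Dop k' (fprod f (dx m g)) n
                 - (\<Sum>l<m. complex_of_real (k' gchoose l) *
                      fprod (Dop (real l) f) (Dop (k' - real l) (dx m g)) n))
      in in_H 0 E \<and>
         H_norm 0 E \<le> sqrt 2 * CK * Cs * (H_norm (k' + real m) f * H_norm (1/2 + \<eta>) g
                          + H_norm (real m + 1/2 + \<eta>) f * H_norm k' g)"
      using inE unfolding Let_def E_def[symmetric] Hf1_def Hf2_def Hg1_def Hg2_def by simp
  qed
qed

end
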